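(* Let $F$ be a finite field of characteristic $3$. Let $k\ge 0$ be an integer, $m=3k+1$, and $t$ an integer with $t^3\equiv 1\pmod m$ and $\gcd(m,t-1)=1$. Let $G=T_{3m}=\langle x,y\mid x^m=y^3=1,\ y^{-1}xy=x^t\rangle$ (of order $3m$) and $FG$ its group algebra. Let $s\in FG$ be the sum of all elements of $G$ whose order is a power of $3$ (including the identity), and let $\mathrm{Anh}(s)=\{\alpha\in FG\mid \alpha s=s\alpha=0\}$. Then $\mathrm{Anh}(s)$ is a nilpotent ideal of $FG$. *)

theory Defs
  imports "HOL-Algebra.Algebra"
begin

text \<open>Group algebra FG of a finite group G (HOL-Algebra) over a field of type 'a.
  Elements are functions carrier G -> 'a, extended by 0 outside the carrier.\<close>

definition ga_carrier :: "('g, 'b) monoid_scheme \<Rightarrow> ('g \<Rightarrow> 'a::field) set" where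
  "ga_carrier G = {f. \<forall>g. g \<notin> carrier G \<longrightarrow> f g = 0}"

definition ga_zero :: "'g \<Rightarrow> 'a::field" where
  "ga_zero = (\<lambda>_. 0)"

definition ga_one :: "('g, 'b) monoid_scheme \<Rightarrow> 'g \<Rightarrow> 'a::field" where
  "ga_one G = (\<lambda>g. if g = \<one>\<^bsub>G\<^esub> then 1 else 0)"

definition ga_mult :: "('g, 'b) monoid_scheme \<Rightarrow> ('g \<Rightarrow> 'a::field) \<Rightarrow> ('g \<Rightarrow> 'a) \<Rightarrow> 'g \<Rightarrow> 'a" where
  "ga_mult G f h = (\<lambda>g. if g \<in> carrier G
      then (\<Sum>a\<in>carrier G. f a * h (inv\<^bsub>G\<^esub> a \<otimes>\<^bsub>G\<^esub> g)) else 0)"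

definition ga_s3 :: "('g, 'b) monoid_scheme \<Rightarrow> 'g \<Rightarrow> 'a::field" where
  "ga_s3 G = (\<lambda>g. if g \<in> carrier G \<and> (\<exists>n::nat. group.ord G g = 3 ^ n) then 1 else 0)"

definition ga_Anh :: "('g, 'b) monoid_scheme \<Rightarrow> ('g \<Rightarrow> 'a::field) \<Rightarrow> ('g \<Rightarrow> 'a) set" where
  "ga_Anh G s = {\<alpha> \<in> ga_carrier G. ga_mult G \<alpha> s = ga_zero \<and> ga_mult G s \<alpha> = ga_zero}"

definition ga_ideal :: "('g, 'b) monoid_scheme \<Rightarrow> ('g \<Rightarrow> 'a::field) set \<Rightarrow> bool" where
  "ga_ideal G I \<longleftrightarrow> I \<subseteq> ga_carrier G \<and> ga_zero \<in> I
     \<and> (\<forall>a\<in>I. \<forall>b\<in>I. (\<lambda>g. a g + b g) \<in> I)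
     \<and> (\<forall>a\<in>I. (\<lambda>g. - a g) \<in> I)
     \<and> (\<forall>r\<in>ga_carrier G. \<forall>a\<in>I. ga_mult G r a \<in> I \<and> ga_mult G a r \<in> I)"

definition ga_nilpotent_ideal :: "('g, 'b) monoid_scheme \<Rightarrow> ('g \<Rightarrow> 'a::field) set \<Rightarrow> bool" where
  "ga_nilpotent_ideal G I \<longleftrightarrow> ga_ideal G I \<and>
     (\<exists>n>0. \<forall>xs. length xs = n \<and> set xs \<subseteq> I \<longrightarrow> foldr (ga_mult G) xs (ga_one G) = ga_zero)"

end

theory Submission
  imports Defs
begin


definition conv :: "(nat \<Rightarrow> 'a::comm_ring_1) \<Rightarrow> (nat \<Rightarrow> 'a) \<Rightarrow> nat \<Rightarrow> 'a" where
  "conv f h j = (\<Sum>i<3. f i * h ((3 - i + j) mod 3))"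

lemma sum3: "(\<Sum>i<(3::nat). F i) = F 0 + F 1 + (F 2 :: 'a::comm_monoid_add)"
  by (simp add: eval_nat_numeral)

lemma rot: "(\<Sum>j<3. f ((c + j) mod 3::nat)) = (\<Sum>j<3. f j :: 'a::comm_monoid_add)"
proof -
  have e: "(c + 1) mod 3 = (c mod 3 + 1) mod 3" "(c + 2) mod 3 = (c mod 3 + 2) mod 3" by presburger+
  have "c mod 3 = 0 \<or> c mod 3 = 1 \<or> c mod 3 = 2" by presburger
  then show ?thesis unfolding sum3 e by (auto simp: ac_simps numeral_2_eq_2)
qed

lemma conv0: "conv f h 0 = f 0*h 0 + f 1 * h 2 + f 2 * h 1"
  by (simp add: conv_def sum3 numeral_2_eq_2)
lemma conv1: "conv f h 1 = f 0 * h 1 + f 1 * h 0 + f 2 * h 2"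
  by (simp add: conv_def sum3 numeral_2_eq_2)
lemma conv2: "conv f h 2 = f 0 * h 2 + f 1 * h 1 + f 2 * h 0"
  by (simp add: conv_def sum3 numeral_2_eq_2)

lemma conv_nil:
  fixes f h l :: "nat \<Rightarrow> 'a::comm_ring_1"
  assumes three: "(3::'a) = 0" and "(\<Sum>j<3. f j) = 0" "(\<Sum>j<3. h j) = 0" "(\<Sum>j<3. l j) = 0" and j: "j < 3"
  shows "conv f (conv h l) j = 0"
proof -
  have f2: "f 2 = - f 0 - f 1" and h2: "h 2 = - h 0 - h 1" and l2: "l 2 = - l 0 - l 1"
    using assms unfolding sum3 by (simp_all add: eq_neg_iff_add_eq_0 algebra_simps)
  have c: "conv f (conv h l) j = 3 * (if j = 0 then
     - f 0*h 1*l 0 - f 0*h 1*l 1 - f 0*h 0*l 1 - f 1*h 0*l 0 - f 1*h 0*l 1 - f 1*h 1*l 0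
   else if j = 1 then
     f 0*h 0*l 1 + f 0*h 1*l 0 + f 0*h 0*l 0 + f 1*h 0*l 0 - f 1*h 1*l 1
   else - f 0*h 0*l 0 + f 0*h 1*l 1 + f 1*h 0*l 1 + f 1*h 1*l 0 + f 1*h 1*l 1)"
  proof -
    have "j = 0 \<or> j = 1 \<or> j = 2" using j by auto
    moreover have "conv f (conv h l) 0 = 3 * (- f 0*h 1*l 0 - f 0*h 1*l 1 - f 0*h 0*l 1 - f 1*h 0*l 0 - f 1*h 0*l 1 - f 1*h 1*l 0)"
      unfolding conv0 conv0 conv1 conv2 f2 h2 l2 by (simp add: algebra_simps)
    moreover have "conv f (conv h l) 1 = 3 * (f 0*h 0*l 1 + f 0*h 1*l 0 + f 0*h 0*l 0 + f 1*h 0*l 0 - f 1*h 1*l 1)"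
      unfolding conv1 conv0 conv1 conv2 f2 h2 l2 by (simp add: algebra_simps)
    moreover have "conv f (conv h l) 2 = 3 * (- f 0*h 0*l 0 + f 0*h 1*l 1 + f 1*h 0*l 1 + f 1*h 1*l 0 + f 1*h 1*l 1)"
      unfolding conv2 conv0 conv1 conv2 f2 h2 l2 by (simp add: algebra_simps)
    ultimately show ?thesis by auto
  qed
  show ?thesis unfolding c three by simp
qed




lemma (in group) xpow_mod:
  assumes "x \<in> carrier G" "x [^] (m::nat) = \<one>"
  shows "x [^] (n::nat) = x [^] (n mod m)"
proof -
  have "x [^] n = x [^] (m * (n div m) + n mod m)" by simp
  also have "\<dots> = (x [^] m) [^] (n div m) \<otimes> x [^] (n mod m)"
    using assms(1) by (simp add: nat_pow_mult nat_pow_pow)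
  also have "\<dots> = x [^] (n mod m)" using assms by simp
  finally show ?thesis .
qed

lemma (in group) comm_pow:
  assumes x: "x \<in> carrier G" and y: "y \<in> carrier G" and c: "x \<otimes> y = y \<otimes> x [^] (T::nat)"
  shows "x [^] (n::nat) \<otimes> y = y \<otimes> x [^] (n * T)"
proof (induction n)
  case 0 then show ?case using y by simp
next
  case (Suc n)
  have "x [^] Suc n \<otimes> y = x [^] n \<otimes> (x \<otimes> y)" using x y by (simp add: m_assoc)
  also have "\<dots> = (x [^] n \<otimes> y) \<otimes> x [^] T" using x y by (simp add: c m_assoc)
  also have "\<dots> = y \<otimes> (x [^] (n * T) \<otimes> x [^] T)" using x y by (simp add: Suc m_assoc)
  also have "\<dots> = y \<otimes> x [^] (Suc n * T)" using x by (simp add: nat_pow_mult add.commute)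
  finally show ?case .
qed

lemma (in group) comm_pow2:
  assumes x: "x \<in> carrier G" and y: "y \<in> carrier G" and c: "y \<otimes> x = x [^] (U::nat) \<otimes> y"
  shows "y [^] (j::nat) \<otimes> x [^] (n::nat) = x [^] (n * U ^ j) \<otimes> y [^] j"
proof -
  have a: "y \<otimes> x [^] (n::nat) = x [^] (n * U) \<otimes> y" for n
  proof (induction n)
    case 0 then show ?case using y by simp
  next
    case (Suc n)
    have "y \<otimes> x [^] Suc n = (y \<otimes> x [^] n) \<otimes> x" using x y by (simp add: m_assoc)
    also have "\<dots> = x [^] (n * U) \<otimes> (y \<otimes> x)" using x y by (simp add: Suc m_assoc)
    also have "\<dots> = (x [^] (n * U) \<otimes> x [^] U) \<otimes> y" using x y by (simp add: c m_assoc)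
    also have "\<dots> = x [^] (Suc n * U) \<otimes> y" using x by (simp add: nat_pow_mult add.commute)
    finally show ?case .
  qed
  show ?thesis
  proof (induction j arbitrary: n)
    case 0 then show ?case using x by simp
  next
    case (Suc j)
    have "y [^] Suc j \<otimes> x [^] n = y [^] j \<otimes> (y \<otimes> x [^] n)" using x y by (simp add: m_assoc nat_pow_Suc2)
    also have "\<dots> = (y [^] j \<otimes> x [^] (n * U)) \<otimes> y" using x y by (simp add: a m_assoc)
    also have "\<dots> = x [^] (n * U * U ^ j) \<otimes> y [^] Suc j" using x y by (simp add: Suc m_assoc nat_pow_Suc)
    finally show ?case by (simp add: ac_simps)
  qed
qed

lemma (in group) nf_mult:
  assumes x: "x \<in> carrier G" and y: "y \<in> carrier G" and c: "y \<otimes> x = x [^] (U::nat) \<otimes> y"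
  shows "(x [^] (a::nat) \<otimes> y [^] (b::nat)) \<otimes> (x [^] (c::nat) \<otimes> y [^] (d::nat))
     = x [^] (a + c * U ^ b) \<otimes> y [^] (b + d)"
proof -
  have "(x [^] a \<otimes> y [^] b) \<otimes> (x [^] c \<otimes> y [^] d) = x [^] a \<otimes> (y [^] b \<otimes> x [^] c) \<otimes> y [^] d"
    using x y by (simp add: m_assoc)
  also have "\<dots> = x [^] a \<otimes> (x [^] (c * U ^ b) \<otimes> y [^] b) \<otimes> y [^] d"
    using comm_pow2[OF x y c] by simp
  also have "\<dots> = (x [^] a \<otimes> x [^] (c * U ^ b)) \<otimes> (y [^] b \<otimes> y [^] d)"
    using x y by (simp add: m_assoc)
  also have "\<dots> = x [^] (a + c * U ^ b) \<otimes> y [^] (b + d)"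
    using x y by (simp add: nat_pow_mult)
  finally show ?thesis .
qed


lemma dvd_U:
  fixes m T :: nat
  assumes dv: "m dvd T^2 + T + 1" and j: "j = 1 \<or> j = 2"
  shows "m dvd 1 + (T*T)^j + (T*T)^(j+j)"
proof -
  have e: "int (T^2 + T + 1) = int T^2 + int T + 1" by simp
  have d1: "int m dvd int T^2 + int T + 1" using dv e int_dvd_int_iff by metis
  have "int m dvd int (1 + (T*T)^j + (T*T)^(j+j))"
    using j
  proof
    assume "j = 1"
    then have "int (1 + (T*T)^j + (T*T)^(j+j)) = (int T^2 + int T + 1) * (int T^2 - int T + 1)"
      by (simp add: algebra_simps power2_eq_square power4_eq_xxxx)
    then show ?thesis using d1 by simp
  next
    assume "j = 2"
    then have "int (1 + (T*T)^j + (T*T)^(j+j)) = (int T^2 + int T + 1) * ((int T^2 - int T + 1) * (int T^4 - int T^2 + 1))"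
      by (simp add: algebra_simps power2_eq_square power4_eq_xxxx eval_nat_numeral)
    then show ?thesis using d1 by simp
  qed
  then show ?thesis by (simp only: int_dvd_int_iff)
qed

lemma (in group) T_structure:
  fixes m T :: nat
  assumes x: "x \<in> carrier G" and y: "y \<in> carrier G"
    and gen: "generate G {x, y} = carrier G"
    and xm: "x [^] m = \<one>" and y3: "y [^] (3::nat) = \<one>"
    and c: "x \<otimes> y = y \<otimes> x [^] T"
    and T3: "T^3 mod m = 1 mod m" and dv: "m dvd T^2 + T + 1"
    and ordG: "order G = 3 * m" and m1: "m mod 3 = 1"
  shows "\<exists>J. (\<forall>g\<in>carrier G. J g < (3::nat)) \<and> (\<forall>a\<in>carrier G. \<forall>b\<in>carrier G. J (a \<otimes> b) = (J a + J b) mod 3)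
     \<and> J \<one> = 0 \<and> (\<forall>j<3. card {g\<in>carrier G. J g = j} = m)
     \<and> (\<forall>g\<in>carrier G. (\<exists>n. ord g = 3 ^ n) \<longleftrightarrow> (g = \<one> \<or> J g \<noteq> 0))"
proof -
  have mpos: "m > 0" using m1 by (cases m) auto
  have fin: "finite (carrier G)" using ordG mpos unfolding order_def by (simp add: card_ge_0_finite)
  define U where "U = T * T"
  have yx: "y \<otimes> x = x [^] U \<otimes> y"
  proof -
    have "x [^] U \<otimes> y = y \<otimes> x [^] (U * T)" by (rule comm_pow[OF x y c])
    also have "x [^] (U * T) = x [^] ((U * T) mod m)" by (rule xpow_mod[OF x xm])
    also have "(U * T) mod m = 1 mod m" using T3 by (simp add: U_def power3_eq_cube)
    also have "x [^] (1 mod m) = x [^] (1::nat)" by (rule xpow_mod[OF x xm, symmetric])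
    finally show ?thesis using x by simp
  qed
  define \<phi> where "\<phi> p = x [^] (fst p) \<otimes> y [^] (snd p)" for p :: "nat \<times> nat"
  have phic: "\<phi> p \<in> carrier G" for p unfolding \<phi>_def using x y by simp
  have phimult: "\<phi> (a, b) \<otimes> \<phi> (c, d) = \<phi> (a + c * U ^ b, b + d)" for a b c d
    unfolding \<phi>_def using nf_mult[OF x y yx] by simp
  have phired: "\<phi> (a, b) = \<phi> (a mod m, b mod 3)" for a b
    unfolding \<phi>_def using xpow_mod[OF x xm, of a] xpow_mod[OF y y3, of b] by simp
  define S where "S = range \<phi>"
  have Smult: "g \<otimes> h \<in> S" if "g \<in> S" "h \<in> S" for g h
    using that unfolding S_def by (auto simp: phimult)
  have one_phi: "\<one> = \<phi> (0, 0)" unfolding \<phi>_def by simp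
  have Spow: "g [^] (n::nat) \<in> S" if "g \<in> S" for g n
  proof (induction n)
    case 0 then show ?case unfolding S_def using one_phi by (simp add: rangeI)
  next
    case (Suc n) then show ?case using Smult[OF Suc that] by simp
  qed
  have Scar: "S \<subseteq> carrier G" unfolding S_def using phic by auto
  have Sinv: "inv g \<in> S" if g: "g \<in> S" for g
  proof -
    have gc: "g \<in> carrier G" using g Scar by auto
    have "order G = Suc (order G - 1)" using ordG mpos by simp
    then have "g [^] (order G - 1) \<otimes> g = g [^] order G" using gc by (metis nat_pow_Suc)
    also have "\<dots> = \<one>" using gc by (rule pow_order_eq_1)
    finally have "inv g = g [^] (order G - 1)" using gc by (intro inv_equality) auto
    then show ?thesis using Spow[OF g] by simp
  qed
  have subS: "subgroup S G"
    by (rule subgroupI) (use Scar Sinv Smult in \<open>auto simp: S_def\<close>)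
  have xS: "x \<in> S" unfolding S_def using x by (intro range_eqI[of _ _ "(1, 0)"]) (simp add: \<phi>_def)
  have yS: "y \<in> S" unfolding S_def using y by (intro range_eqI[of _ _ "(0, 1)"]) (simp add: \<phi>_def)
  have "carrier G \<subseteq> S" using generate_subgroup_incl[OF _ subS, of "{x, y}"] xS yS gen by auto
  define I where "I = {..<m} \<times> {..<(3::nat)}"
  have carI: "carrier G = \<phi> ` I"
  proof
    show "carrier G \<subseteq> \<phi> ` I"
    proof
      fix g assume "g \<in> carrier G"
      then obtain a b where "g = \<phi> (a, b)" using \<open>carrier G \<subseteq> S\<close> unfolding S_def by auto
      then have "g = \<phi> (a mod m, b mod 3)" using phired by simp
      moreover have "(a mod m, b mod 3) \<in> I" unfolding I_def using mpos by auto
      ultimately show "g \<in> \<phi> ` I" by blast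
    qed
  qed (use phic in auto)
  have finI: "finite I" unfolding I_def by simp
  have cardI: "card I = 3 * m" unfolding I_def by simp
  have inj: "inj_on \<phi> I"
    by (rule eq_card_imp_inj_on[OF finI]) (use carI cardI ordG in \<open>simp add: order_def\<close>)
  define J where "J g = snd (the_inv_into I \<phi> g)" for g
  have Jphi: "J (\<phi> p) = snd p" if "p \<in> I" for p
    unfolding J_def using the_inv_into_f_f[OF inj that] by simp
  have Jlt: "\<forall>g\<in>carrier G. J g < 3"
    using carI Jphi unfolding I_def by auto
  have Jmult: "\<forall>a\<in>carrier G. \<forall>b\<in>carrier G. J (a \<otimes> b) = (J a + J b) mod 3"
  proof (intro ballI)
    fix a b assume "a \<in> carrier G" "b \<in> carrier G"
    then obtain i j i' j' where a: "a = \<phi> (i, j)" "(i, j) \<in> I" and b: "b = \<phi> (i', j')" "(i', j') \<in> I"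
      using carI by auto
    have "a \<otimes> b = \<phi> ((i + i' * U ^ j) mod m, (j + j') mod 3)" using a b phimult phired by simp
    moreover have "((i + i' * U ^ j) mod m, (j + j') mod 3) \<in> I" unfolding I_def using mpos by auto
    ultimately show "J (a \<otimes> b) = (J a + J b) mod 3" using Jphi a b by simp
  qed
  have Jone: "J \<one> = 0" using one_phi Jphi[of "(0,0)"] mpos by (simp add: I_def)
  have fib: "\<forall>j<3. card {g\<in>carrier G. J g = j} = m"
  proof (intro allI impI)
    fix j :: nat assume j: "j < 3"
    have "{g\<in>carrier G. J g = j} = \<phi> ` ({..<m} \<times> {j})"
    proof
      show "{g\<in>carrier G. J g = j} \<subseteq> \<phi> ` ({..<m} \<times> {j})"
      proof
        fix g assume "g \<in> {g\<in>carrier G. J g = j}"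
        then obtain p where "p \<in> I" "g = \<phi> p" "J g = j" using carI by auto
        then show "g \<in> \<phi> ` ({..<m} \<times> {j})" using Jphi unfolding I_def by force
      qed
      show "\<phi> ` ({..<m} \<times> {j}) \<subseteq> {g\<in>carrier G. J g = j}"
        using Jphi phic j unfolding I_def by auto
    qed
    moreover have "inj_on \<phi> ({..<m} \<times> {j})" by (rule inj_on_subset[OF inj]) (use j in \<open>auto simp: I_def\<close>)
    ultimately show "card {g\<in>carrier G. J g = j} = m" by (simp add: card_image)
  qed
  have ordc: "(\<exists>n. ord g = 3 ^ n) \<longleftrightarrow> (g = \<one> \<or> J g \<noteq> 0)" if g: "g \<in> carrier G" for g
  proof -
    obtain i j where gp: "g = \<phi> (i, j)" and ij: "(i, j) \<in> I" using carI g by auto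
    have Jg: "J g = j" using Jphi[OF ij] gp by simp
    show ?thesis
    proof (cases "j = 0")
      case True
      have gx: "g = x [^] i" using gp True x by (simp add: \<phi>_def)
      have "g [^] m = (x [^] m) [^] i" using gx x by (simp add: nat_pow_pow mult.commute)
      then have "g [^] m = \<one>" using xm by simp
      then have om: "ord g dvd m" using g pow_eq_id by blast
      have h1: "g = \<one>" if "ord g = 3 ^ n" for n
      proof (cases n)
        case 0 then show ?thesis using that g ord_eq_1 by simp
      next
        case (Suc n')
        then have "3 dvd ord g" using that by simp
        then have "3 dvd m" using om by (rule dvd_trans)
        then show ?thesis using m1 by auto
      qed
      have h2: "\<exists>n. ord \<one> = 3 ^ n" by (rule exI[of _ 0]) simp
      show ?thesis
      proof
        assume "\<exists>n. ord g = 3 ^ n"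
        then obtain n where "ord g = 3 ^ n" by blast
        then show "g = \<one> \<or> J g \<noteq> 0" using h1 by blast
      next
        assume "g = \<one> \<or> J g \<noteq> 0"
        then have "g = \<one>" using Jg True by simp
        then show "\<exists>n. ord g = 3 ^ n" using h2 by simp
      qed
    next
      case False
      then have j12: "j = 1 \<or> j = 2" using ij unfolding I_def by auto
      have "g [^] (3::nat) = g \<otimes> g \<otimes> g" using g by (simp add: numeral_3_eq_3 nat_pow_Suc)
      also have "\<dots> = \<phi> (i + i * U ^ j + i * U ^ (j + j), j + j + j)" using gp phimult by simp
      also have "\<dots> = \<phi> ((i + i * U ^ j + i * U ^ (j + j)) mod m, (j + j + j) mod 3)" by (rule phired)
      also have "(i + i * U ^ j + i * U ^ (j + j)) mod m = 0"
      proof -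
        have "m dvd 1 + U ^ j + U ^ (j + j)" unfolding U_def by (rule dvd_U[OF dv j12])
        then have d: "m dvd i * (1 + U ^ j + U ^ (j + j))" by (rule dvd_mult)
        have eq: "i + i * U ^ j + i * U ^ (j + j) = i * (1 + U ^ j + U ^ (j + j))" by (simp add: algebra_simps)
        show ?thesis using d unfolding eq by (rule dvd_imp_mod_0)
      qed
      also have "(j + j + j) mod 3 = 0" by presburger
      finally have g3: "g [^] (3::nat) = \<one>" using one_phi by simp
      then have "ord g dvd 3" using g pow_eq_id by blast
      moreover have "ord g \<noteq> 1" using g ord_eq_1 Jg Jone False by auto
      ultimately have "ord g = 3"
      proof -
        assume d3: "ord g dvd 3" and n1: "ord g \<noteq> 1"
        have le: "ord g \<le> 3" using d3 by (rule dvd_imp_le) simp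
        have "ord g \<noteq> 0" using d3 by (intro notI) simp
        moreover have "ord g \<noteq> 2" using d3 by auto
        ultimately show "ord g = 3" using le n1 by linarith
      qed
      then have "ord g = 3 ^ 1" by simp
      then show ?thesis using Jg False by blast
    qed
  qed
  show ?thesis
    by (rule exI[of _ J]) (use Jlt Jmult Jone fib ordc in blast)
qed



locale ga_setup =
  fixes G :: "('g, 'b) monoid_scheme" (structure) and J :: "'g \<Rightarrow> nat" and s :: "'g \<Rightarrow> 'a::field"
  assumes grp: "group G" and fin: "finite (carrier G)"
    and Jlt: "\<And>g. g \<in> carrier G \<Longrightarrow> J g < 3"
    and Jmult: "\<And>a b. a \<in> carrier G \<Longrightarrow> b \<in> carrier G \<Longrightarrow> J (a \<otimes> b) = (J a + J b) mod 3"
    and Jone: "J \<one> = 0"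
    and fib: "\<And>j. j < 3 \<Longrightarrow> (of_nat (card {g\<in>carrier G. J g = j}) :: 'a) = 1"
    and three: "(3 :: 'a) = 0"
    and s_def: "s = (\<lambda>g. if g \<in> carrier G \<and> (g = \<one> \<or> J g \<noteq> 0) then 1 else 0)"
begin

definition P :: "('g \<Rightarrow> 'a) \<Rightarrow> bool" where
  "P \<alpha> \<longleftrightarrow> \<alpha> \<in> ga_carrier G \<and> (\<exists>f. (\<forall>g\<in>carrier G. \<alpha> g = f (J g)) \<and> (\<Sum>j<3. f j) = 0)"

lemma sumJ: "(\<Sum>g\<in>carrier G. F (J g)) = (\<Sum>j<3. F j :: 'a)"
proof -
  have "(\<Sum>g\<in>carrier G. F (J g)) = (\<Sum>j<3. \<Sum>g\<in>{g\<in>carrier G. J g = j}. F (J g))"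
    by (rule sum.group[symmetric]) (use fin Jlt in auto)
  also have "\<dots> = (\<Sum>j<3. F j)"
  proof (rule sum.cong[OF refl])
    fix j assume "j \<in> {..<(3::nat)}"
    have "(\<Sum>g\<in>{g\<in>carrier G. J g = j}. F (J g)) = (\<Sum>g\<in>{g\<in>carrier G. J g = j}. F j)"
      by (rule sum.cong) auto
    also have "\<dots> = of_nat (card {g\<in>carrier G. J g = j}) * F j"
      by simp
    finally show "(\<Sum>g\<in>{g\<in>carrier G. J g = j}. F (J g)) = F j" using fib \<open>j \<in> {..<3}\<close> by simp
  qed
  finally show ?thesis .
qed

lemma Jinv: "a \<in> carrier G \<Longrightarrow> J (inv a) = (3 - J a) mod 3"
proof -
  interpret group G by (rule grp)
  assume a: "a \<in> carrier G"
  have "J (inv a \<otimes> a) = 0" using a Jone by simp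
  moreover have "J (inv a \<otimes> a) = (J (inv a) + J a) mod 3" by (rule Jmult) (simp_all add: a)
  ultimately have "(J (inv a) + J a) mod 3 = 0" by simp
  moreover have "J (inv a) = 0 \<or> J (inv a) = 1 \<or> J (inv a) = 2" "J a = 0 \<or> J a = 1 \<or> J a = 2"
    using a Jlt[of a] Jlt[of "inv a"] by auto
  ultimately show ?thesis by (elim disjE) simp_all
qed

lemma Jdiff: "a \<in> carrier G \<Longrightarrow> g \<in> carrier G \<Longrightarrow> J (inv a \<otimes> g) = (3 - J a + J g) mod 3"
proof -
  interpret group G by (rule grp)
  assume "a \<in> carrier G" "g \<in> carrier G"
  then show ?thesis using Jmult Jinv by (simp add: mod_add_left_eq) 
qed

lemma Jdiff0: "a \<in> carrier G \<Longrightarrow> g \<in> carrier G \<Longrightarrow> (J (inv a \<otimes> g) = 0) = (J a = J g)"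
proof -
  assume a: "a \<in> carrier G" and g: "g \<in> carrier G"
  have "J a = 0 \<or> J a = 1 \<or> J a = 2" "J g = 0 \<or> J g = 1 \<or> J g = 2" using a g Jlt by fastforce+
  then show ?thesis using Jdiff[OF a g] by (elim disjE) simp_all
qed

lemma inv_one_iff: "a \<in> carrier G \<Longrightarrow> g \<in> carrier G \<Longrightarrow> (inv a \<otimes> g = \<one>) = (a = g)"
proof -
  interpret group G by (rule grp)
  show "a \<in> carrier G \<Longrightarrow> g \<in> carrier G \<Longrightarrow> (inv a \<otimes> g = \<one>) = (a = g)"
    by (metis inv_closed inv_inv l_inv inv_equality)
qed

lemma s_diff: "a \<in> carrier G \<Longrightarrow> g \<in> carrier G \<Longrightarrow>
   s (inv a \<otimes> g) = (if a = g then 1 else 0) + (if J a \<noteq> J g then 1 else 0)"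
proof -
  interpret group G by (rule grp)
  assume "a \<in> carrier G" "g \<in> carrier G"
  then show ?thesis using inv_one_iff[of a g] Jdiff0[of a g] by (auto simp: s_def)
qed

lemma s_val: "a \<in> carrier G \<Longrightarrow> s a = (if a = \<one> then 1 else 0) + (if J a \<noteq> 0 then 1 else 0)"
  using Jone by (auto simp: s_def)


lemma mult_J:
  fixes \<alpha> \<beta> :: "'g \<Rightarrow> 'a" and h :: "nat \<Rightarrow> 'a"
  assumes "\<And>g. g \<in> carrier G \<Longrightarrow> \<beta> g = h (J g)" and g: "g \<in> carrier G"
  shows "ga_mult G \<alpha> \<beta> g = (\<Sum>a\<in>carrier G. \<alpha> a * h ((3 - J a + J g) mod 3))"
proof -
  interpret group G by (rule grp)
  show ?thesis unfolding ga_mult_def using g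
    by (auto intro!: sum.cong simp: assms Jdiff)
qed

lemma conv_J:
  fixes \<alpha> \<beta> :: "'g \<Rightarrow> 'a" and f h :: "nat \<Rightarrow> 'a"
  assumes "\<And>g. g \<in> carrier G \<Longrightarrow> \<alpha> g = f (J g)"
    and "\<And>g. g \<in> carrier G \<Longrightarrow> \<beta> g = h (J g)" and g: "g \<in> carrier G"
  shows "ga_mult G \<alpha> \<beta> g = conv f h (J g)"
proof -
  have "ga_mult G \<alpha> \<beta> g = (\<Sum>a\<in>carrier G. f (J a) * h ((3 - J a + J g) mod 3))"
    using mult_J[of \<beta> h g \<alpha>] assms by (auto intro!: sum.cong)
  also have "\<dots> = conv f h (J g)" unfolding conv_def by (rule sumJ)
  finally show ?thesis .
qed

lemma ga_mult_out: "g \<notin> carrier G \<Longrightarrow> ga_mult G \<alpha> \<beta> g = 0"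
  by (simp add: ga_mult_def)

lemma ga_mult_carrier: "ga_mult G \<alpha> \<beta> \<in> ga_carrier G"
  by (simp add: ga_carrier_def ga_mult_out)

lemma mult_one: "\<gamma> \<in> ga_carrier G \<Longrightarrow> ga_mult G \<gamma> (ga_one G) = \<gamma>"
proof
  interpret group G by (rule grp)
  fix g assume c: "\<gamma> \<in> ga_carrier G"
  show "ga_mult G \<gamma> (ga_one G) g = \<gamma> g"
  proof (cases "g \<in> carrier G")
    case True
    have "ga_mult G \<gamma> (ga_one G) g = (\<Sum>a\<in>carrier G. if a = g then \<gamma> a else 0)"
      unfolding ga_mult_def ga_one_def using True by (auto intro!: sum.cong simp: inv_one_iff)
    also have "\<dots> = \<gamma> g" using True fin by simp
    finally show ?thesis .
  next
    case False then show ?thesis using c by (simp add: ga_mult_def ga_carrier_def)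
  qed
qed

lemma sum_if_eq: "j < 3 \<Longrightarrow> (\<Sum>a\<in>carrier G. if J a = j then c else 0) = (c::'a)"
proof -
  assume j: "j < 3"
  have "(\<Sum>a\<in>carrier G. if J a = j then c else 0) = (\<Sum>a\<in>{a\<in>carrier G. J a = j}. c)"
    by (rule sum.inter_filter[OF fin, symmetric])
  also have "\<dots> = of_nat (card {a\<in>carrier G. J a = j}) * c" by simp
  finally show ?thesis using fib[OF j] by simp
qed

lemma anh_P:
  assumes ac: "\<alpha> \<in> ga_carrier G" and z: "ga_mult G \<alpha> s = ga_zero"
  shows "P \<alpha>"
proof -
  interpret group G by (rule grp)
  define E where "E = (\<Sum>a\<in>carrier G. \<alpha> a)"
  define C where "C j = (\<Sum>a\<in>carrier G. if J a = j then \<alpha> a else 0)" for j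
  have key: "\<alpha> g = C (J g) - E" if g: "g \<in> carrier G" for g
  proof -
    have "0 = ga_mult G \<alpha> s g" using z by (simp add: ga_zero_def)
    also have "\<dots> = (\<Sum>a\<in>carrier G. \<alpha> a * ((if a = g then 1 else 0) + (if J a \<noteq> J g then 1 else 0)))"
      unfolding ga_mult_def using g by (auto intro!: sum.cong simp: s_diff)
    also have "\<dots> = (\<Sum>a\<in>carrier G. if a = g then \<alpha> a else 0) + (\<Sum>a\<in>carrier G. if J a \<noteq> J g then \<alpha> a else 0)"
      unfolding sum.distrib[symmetric] by (rule sum.cong) auto
    also have "(\<Sum>a\<in>carrier G. if a = g then \<alpha> a else 0) = \<alpha> g" using g fin by simp
    also have "E = C (J g) + (\<Sum>a\<in>carrier G. if J a \<noteq> J g then \<alpha> a else 0)"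
      unfolding E_def C_def sum.distrib[symmetric] by (rule sum.cong) auto
    then have "(\<Sum>a\<in>carrier G. if J a \<noteq> J g then \<alpha> a else 0) = E - C (J g)" by (simp add: algebra_simps)
    finally show ?thesis by (simp add: algebra_simps eq_neg_iff_add_eq_0)
  qed
  have "C 0 = (\<Sum>a\<in>carrier G. if J a = 0 then C 0 - E else 0)"
    unfolding C_def[of 0] by (rule sum.cong) (auto simp: key C_def)
  also have "\<dots> = C 0 - E" by (rule sum_if_eq) simp
  finally have E0: "E = 0" by simp
  have hf: "\<forall>g\<in>carrier G. \<alpha> g = C (J g)" using key E0 by simp
  have "(\<Sum>j<3. C j) = (\<Sum>g\<in>carrier G. C (J g))" by (rule sumJ[symmetric])
  also have "\<dots> = E" unfolding E_def using hf by simp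
  finally show ?thesis unfolding P_def using ac hf E0 by auto
qed

lemma P_anh:
  assumes "P \<alpha>" shows "\<alpha> \<in> ga_Anh G s"
proof -
  interpret group G by (rule grp)
  obtain f where ac: "\<alpha> \<in> ga_carrier G" and hf: "\<And>g. g\<in>carrier G \<Longrightarrow> \<alpha> g = f (J g)"
    and sf: "(\<Sum>j<3. f j) = 0" using assms unfolding P_def by blast
  have sf': "f 0 + f 1 + f 2 = 0" using sf unfolding sum3 .
  have L: "ga_mult G \<alpha> s g = 0" for g
  proof (cases "g \<in> carrier G")
    case g: True
    have "ga_mult G \<alpha> s g = (\<Sum>a\<in>carrier G. \<alpha> a * ((if a = g then 1 else 0) + (if J a \<noteq> J g then 1 else 0)))"
      unfolding ga_mult_def using g by (auto intro!: sum.cong simp: s_diff)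
    also have "\<dots> = (\<Sum>a\<in>carrier G. if a = g then \<alpha> a else 0) + (\<Sum>a\<in>carrier G. if J a \<noteq> J g then f (J a) else 0)"
      unfolding sum.distrib[symmetric] by (rule sum.cong) (auto simp: hf)
    also have "(\<Sum>a\<in>carrier G. if a = g then \<alpha> a else 0) = f (J g)" using g fin hf by simp
    also have "(\<Sum>a\<in>carrier G. if J a \<noteq> J g then f (J a) else 0) = (\<Sum>i<3. if i \<noteq> J g then f i else 0)"
      by (rule sumJ)
    also have "f (J g) + (\<Sum>i<3. if i \<noteq> J g then f i else 0) = 0"
    proof -
      have "J g = 0 \<or> J g = 1 \<or> J g = 2" using Jlt[OF g] by auto
      then show ?thesis unfolding sum3 using sf' by (elim disjE) (simp_all add: ac_simps numeral_2_eq_2)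
    qed
    finally show ?thesis .
  qed (simp add: ga_mult_out)
  have R: "ga_mult G s \<alpha> g = 0" for g
  proof (cases "g \<in> carrier G")
    case g: True
    have "ga_mult G s \<alpha> g = (\<Sum>a\<in>carrier G. s a * f ((3 - J a + J g) mod 3))"
      by (rule mult_J) (use hf g in auto)
    also have "\<dots> = (\<Sum>a\<in>carrier G. if a = \<one> then f ((3 - J a + J g) mod 3) else 0)
        + (\<Sum>a\<in>carrier G. if J a \<noteq> 0 then f ((3 - J a + J g) mod 3) else 0)"
      unfolding sum.distrib[symmetric] by (rule sum.cong) (auto simp: s_val)
    also have "(\<Sum>a\<in>carrier G. if a = \<one> then f ((3 - J a + J g) mod 3) else 0) = f (J g)"
      using fin Jone Jlt[OF g] by simp
    also have "(\<Sum>a\<in>carrier G. if J a \<noteq> 0 then f ((3 - J a + J g) mod 3) else 0)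
       = (\<Sum>i<3. if i \<noteq> 0 then f ((3 - i + J g) mod 3) else 0)"
      by (rule sumJ)
    also have "f (J g) + (\<Sum>i<3. if i \<noteq> 0 then f ((3 - i + J g) mod 3) else 0) = 0"
    proof -
      have "J g = 0 \<or> J g = 1 \<or> J g = 2" using Jlt[OF g] by auto
      then show ?thesis unfolding sum3 using sf' by (elim disjE) (simp_all add: ac_simps numeral_2_eq_2)
    qed
    finally show ?thesis .
  qed (simp add: ga_mult_out)
  show ?thesis unfolding ga_Anh_def ga_zero_def using ac L R by auto
qed

lemma P_lmult:
  assumes "P \<alpha>" shows "P (ga_mult G r \<alpha>)"
proof -
  interpret group G by (rule grp)
  obtain f where hf: "\<And>g. g\<in>carrier G \<Longrightarrow> \<alpha> g = f (J g)"
    and sf: "(\<Sum>j<3. f j) = 0" using assms unfolding P_def by blast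
  define f' where "f' j = (\<Sum>a\<in>carrier G. r a * f ((3 - J a + j) mod 3))" for j
  have h1: "\<forall>g\<in>carrier G. ga_mult G r \<alpha> g = f' (J g)"
    unfolding f'_def using mult_J[of \<alpha> f _ r] hf by auto
  have "(\<Sum>j<3. f' j) = (\<Sum>a\<in>carrier G. r a * (\<Sum>j<3. f ((3 - J a + j) mod 3)))"
    unfolding f'_def sum_distrib_left by (rule sum.swap)
  also have "\<dots> = 0" using rot[of f] sf by simp
  finally show ?thesis unfolding P_def using h1 ga_mult_carrier by blast
qed

lemma P_rmult:
  assumes "P \<alpha>" shows "P (ga_mult G \<alpha> r)"
proof -
  interpret group G by (rule grp)
  obtain f where hf: "\<And>g. g\<in>carrier G \<Longrightarrow> \<alpha> g = f (J g)"
    and sf: "(\<Sum>j<3. f j) = 0" using assms unfolding P_def by blast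
  define f' where "f' j = (\<Sum>b\<in>carrier G. f ((j + (3 - J b) mod 3) mod 3) * r b)" for j
  have h1: "ga_mult G \<alpha> r g = f' (J g)" if g: "g \<in> carrier G" for g
  proof -
    have bij: "bij_betw (\<lambda>a. inv a \<otimes> g) (carrier G) (carrier G)"
    proof (rule bij_betw_byWitness[where f'="\<lambda>b. g \<otimes> inv b"])
      show "\<forall>a\<in>carrier G. g \<otimes> inv (inv a \<otimes> g) = a" using g
        by (simp add: inv_mult_group m_assoc[symmetric])
      show "\<forall>b\<in>carrier G. inv (g \<otimes> inv b) \<otimes> g = b" using g
        by (simp add: inv_mult_group m_assoc)
    qed (use g in auto)
    have "ga_mult G \<alpha> r g = (\<Sum>a\<in>carrier G. f (J (g \<otimes> inv (inv a \<otimes> g))) * r (inv a \<otimes> g))"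
      unfolding ga_mult_def using g by (auto intro!: sum.cong simp: hf inv_mult_group m_assoc[symmetric])
    also have "\<dots> = (\<Sum>b\<in>carrier G. f (J (g \<otimes> inv b)) * r b)"
      by (rule sum.reindex_bij_betw[OF bij, where g = "\<lambda>b. f (J (g \<otimes> inv b)) * r b"])
    also have "\<dots> = f' (J g)" unfolding f'_def using g
      by (auto intro!: sum.cong simp: Jmult Jinv)
    finally show ?thesis .
  qed
  have "(\<Sum>j<3. f' j) = (\<Sum>b\<in>carrier G. r b * (\<Sum>j<3. f ((j + (3 - J b) mod 3) mod 3)))"
    unfolding f'_def sum_distrib_left by (subst sum.swap) (simp add: mult.commute)
  also have "\<dots> = 0"
  proof -
    have "(\<Sum>j<3. f ((j + c) mod 3)) = 0" for c by (subst add.commute) (simp add: rot sf)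
    then show ?thesis by simp
  qed
  finally show ?thesis unfolding P_def using h1 ga_mult_carrier by blast
qed

lemma len3: "length xs = 3 \<Longrightarrow> \<exists>a b c. xs = [a, b, c]"
  by (auto simp: numeral_3_eq_3 length_Suc_conv)

theorem nil: "ga_nilpotent_ideal G (ga_Anh G s)"
proof -
  have eq: "ga_Anh G s = Collect P"
    using anh_P P_anh unfolding ga_Anh_def by blast
  have ideal: "ga_ideal G (Collect P)"
    unfolding ga_ideal_def
  proof (intro conjI ballI)
    show "Collect P \<subseteq> ga_carrier G" unfolding P_def by auto
    show "ga_zero \<in> Collect P" unfolding P_def ga_zero_def ga_carrier_def
      by (auto intro!: exI[of _ "\<lambda>_. 0"])
    fix a assume a: "a \<in> Collect P"
    then obtain f where hf: "a \<in> ga_carrier G" "\<And>g. g\<in>carrier G \<Longrightarrow> a g = f (J g)" "(\<Sum>j<3. f j) = 0"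
      unfolding P_def by blast
    show "(\<lambda>g. - a g) \<in> Collect P" unfolding P_def using hf
      by (auto simp: ga_carrier_def sum_negf intro!: exI[of _ "\<lambda>j. - f j"])
    {
      fix b assume "b \<in> Collect P"
      then obtain h where hh: "b \<in> ga_carrier G" "\<And>g. g\<in>carrier G \<Longrightarrow> b g = h (J g)" "(\<Sum>j<3. h j) = 0"
        unfolding P_def by blast
      show "(\<lambda>g. a g + b g) \<in> Collect P" unfolding P_def using hf hh
        by (auto simp: ga_carrier_def sum.distrib intro!: exI[of _ "\<lambda>j. f j + h j"])
    }
    fix r :: "'g \<Rightarrow> 'a" assume "r \<in> ga_carrier G"
    show "ga_mult G r a \<in> Collect P" "ga_mult G a r \<in> Collect P"
      using a P_lmult P_rmult by auto
  qed
  have "foldr (ga_mult G) xs (ga_one G) = ga_zero" if len: "length xs = 3" and sub: "set xs \<subseteq> Collect P" for xs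
  proof -
    obtain a b c where xs: "xs = [a, b, c]" using len3[OF len] by blast
    have "P a" "P b" "P c" using sub xs by auto
    then obtain f h l where
      hf: "\<And>g. g\<in>carrier G \<Longrightarrow> a g = f (J g)" "(\<Sum>j<3. f j) = 0" and
      hh: "\<And>g. g\<in>carrier G \<Longrightarrow> b g = h (J g)" "(\<Sum>j<3. h j) = 0" and
      hl: "\<And>g. g\<in>carrier G \<Longrightarrow> c g = l (J g)" "(\<Sum>j<3. l j) = 0" and cc: "c \<in> ga_carrier G"
      unfolding P_def by metis
    have bc: "ga_mult G b c g = conv h l (J g)" if "g \<in> carrier G" for g
      by (rule conv_J) (use hh hl that in auto)
    have abc: "ga_mult G a (ga_mult G b c) g = 0" for g
    proof (cases "g \<in> carrier G")
      case True
      have "ga_mult G a (ga_mult G b c) g = conv f (conv h l) (J g)"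
        by (rule conv_J) (use hf bc True in auto)
      also have "\<dots> = 0" by (rule conv_nil) (use three hf hh hl Jlt True in auto)
      finally show ?thesis .
    qed (simp add: ga_mult_out)
    show ?thesis unfolding xs using abc by (simp add: mult_one[OF cc] ga_zero_def fun_eq_iff)
  qed
  then show ?thesis unfolding ga_nilpotent_ideal_def eq using ideal
    by (intro conjI exI[of _ 3]) auto
qed

end

theorem proposition3p3:
  fixes G :: "('g, 'b) monoid_scheme" (structure)
    and x y :: 'g and k :: nat and t :: int
  assumes "finite (UNIV :: 'a::field set)"
    and "CHAR('a) = 3"
    and "group G"
    and "t ^ 3 mod int (3 * k + 1) = 1 mod int (3 * k + 1)"
    and "gcd (int (3 * k + 1)) (t - 1) = 1"
    and "x \<in> carrier G" and "y \<in> carrier G"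
    and "generate G {x, y} = carrier G"
    and "x [^] (3 * k + 1) = \<one>"
    and "y [^] (3::nat) = \<one>"
    and "inv y \<otimes> x \<otimes> y = x [^] t"
    and "order G = 3 * (3 * k + 1)"
  shows "ga_nilpotent_ideal G (ga_Anh G (ga_s3 G :: 'g \<Rightarrow> 'a))"
proof -
  interpret grp: group G by (rule assms(3))
  define m where "m = 3 * k + 1"
  define T where "T = nat (t mod int m)"
  have mpos: "m > 0" by (simp add: m_def)
  have m1: "m mod 3 = 1" by (simp add: m_def)
  have tT: "int T = t mod int m" using mpos by (simp add: T_def)
  have xm: "x [^] m = \<one>" using assms(9) by (simp add: m_def)
  have ordx: "group.ord G x dvd m" by (rule iffD1[OF grp.pow_eq_id[OF assms(6)] xm])
  have mdT: "int m dvd (int T - t)"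
    using mod_eq_dvd_iff[of "t mod int m" "int m" t] tT by simp
  have xt: "x [^] t = x [^] T"
  proof -
    have "int (group.ord G x) dvd int m" using ordx by simp
    then have "int (group.ord G x) dvd (int T - t)" using mdT by (rule dvd_trans)
    then have "x [^] t = x [^] (int T)" using grp.int_pow_eq[OF assms(6)] by blast
    then show ?thesis by (simp add: int_pow_int)
  qed
  have c: "x \<otimes> y = y \<otimes> x [^] T"
  proof -
    have "y \<otimes> (inv y \<otimes> x \<otimes> y) = x \<otimes> y" using assms(6,7) by (simp add: grp.m_assoc[symmetric])
    then show ?thesis using assms(11) xt by simp
  qed
  have T3: "T^3 mod m = 1 mod m"
  proof -
    have "int (T^3 mod m) = (int T)^3 mod int m" by (simp add: zmod_int)
    also have "\<dots> = (t mod int m)^3 mod int m" using tT by simp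
    also have "\<dots> = t^3 mod int m" by (rule power_mod)
    also have "\<dots> = 1 mod int m" using assms(4) by (simp add: m_def)
    also have "\<dots> = int (1 mod m)" by (simp only: zmod_int of_nat_1)
    finally show ?thesis by (simp only: of_nat_eq_iff)
  qed
  have dv: "m dvd T^2 + T + 1"
  proof -
    have "int m dvd t^3 - 1" using assms(4) mod_eq_dvd_iff m_def by metis
    moreover have "t^3 - 1 = (t - 1) * (t^2 + t + 1)" by (simp add: algebra_simps power2_eq_square power3_eq_cube)
    moreover have "coprime (int m) (t - 1)" using assms(5) by (simp add: m_def coprime_iff_gcd_eq_1)
    ultimately have d1: "int m dvd t^2 + t + 1" using coprime_dvd_mult_right_iff by metis
    have "(int T)^2 + int T + 1 = (t^2 + t + 1) + (int T - t) * (int T + t + 1)"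
      by (simp add: algebra_simps power2_eq_square)
    also have "int m dvd \<dots>" using d1 mdT by simp
    finally have d2: "int m dvd (int T)^2 + int T + 1" .
    have "int (T^2 + T + 1) = (int T)^2 + int T + 1" by simp
    with d2 have "int m dvd int (T^2 + T + 1)" by metis
    then show ?thesis by (simp only: int_dvd_int_iff)
  qed
  have ordG: "order G = 3 * m" using assms(12) by (simp add: m_def)
  obtain J where Jlt: "\<forall>g\<in>carrier G. J g < (3::nat)"
    and Jmult: "\<forall>a\<in>carrier G. \<forall>b\<in>carrier G. J (a \<otimes> b) = (J a + J b) mod 3"
    and Jone: "J \<one> = 0" and fib: "\<forall>j<3. card {g\<in>carrier G. J g = j} = m"
    and ordc: "\<forall>g\<in>carrier G. (\<exists>n. group.ord G g = 3 ^ n) \<longleftrightarrow> (g = \<one> \<or> J g \<noteq> 0)"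
    using grp.T_structure[OF assms(6,7,8) xm assms(10) c T3 dv ordG m1] by blast
  have fin: "finite (carrier G)" using ordG mpos unfolding order_def by (simp add: card_ge_0_finite)
  have three: "(3::'a) = 0" using of_nat_CHAR[where 'a='a] assms(2) by simp
  have fib': "(of_nat (card {g\<in>carrier G. J g = j}) :: 'a) = 1" if "j < 3" for j
    using fib that by (simp add: m_def three)
  have sdef: "(ga_s3 G :: 'g \<Rightarrow> 'a) = (\<lambda>g. if g \<in> carrier G \<and> (g = \<one> \<or> J g \<noteq> 0) then 1 else 0)"
    unfolding ga_s3_def
  proof (rule ext)
    fix g
    show "(if g \<in> carrier G \<and> (\<exists>n. group.ord G g = 3 ^ n) then 1 else (0::'a)) =
      (if g \<in> carrier G \<and> (g = \<one> \<or> J g \<noteq> 0) then 1 else 0)"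
    proof (cases "g \<in> carrier G")
      case True
      then have "(\<exists>n. group.ord G g = 3 ^ n) = (g = \<one> \<or> J g \<noteq> 0)" using ordc by blast
      then show ?thesis using True by simp
    qed simp
  qed
  have "ga_setup G J (ga_s3 G :: 'g \<Rightarrow> 'a)"
    by (rule ga_setup.intro) (use assms(3) fin Jlt Jmult Jone fib' three sdef in auto)
  then show ?thesis by (rule ga_setup.nil)
qed

end
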